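(* Fix $\theta,\varphi\in\mathbb{R}$ and $v\in(0,1)$, and for $\varphi_1,\varphi_3\in\mathbb{R}$, $v_2\in[0,1)$ let $$g(\varphi_1,v_2,\varphi_3)=vv_2e^{i(\varphi-\varphi_1+\theta)}+vv_2e^{i(\theta-\varphi+\varphi_3)}+v^2e^{i(\varphi_3-\theta-\varphi_1)}.$$ Then for every $v_2$ with $v\le v_2<1$, the set $\{g(\varphi_1,v_2,\varphi_3):\varphi_1,\varphi_3\in\mathbb{R}\}\subset\mathbb{C}$ is simply connected (it has no holes). *)

theory Defs
  imports "HOL-Analysis.Analysis"
begin

definition gfun :: "real \<Rightarrow> real \<Rightarrow> real \<Rightarrow> real \<Rightarrow> real \<Rightarrow> real \<Rightarrow> complex" where
  "gfun \<theta> \<phi> v \<phi>1 v2 \<phi>3 =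
     complex_of_real (v * v2) * cis (\<phi> - \<phi>1 + \<theta>)
   + complex_of_real (v * v2) * cis (\<theta> - \<phi> + \<phi>3)
   + complex_of_real (v^2) * cis (\<phi>3 - \<theta> - \<phi>1)"

end

theory Submission
  imports Defs
begin

lemma mono_ineq:
  fixes s m1 m2 x :: real
  assumes "0 \<le> s" "s \<le> m1" "m1 \<le> m2" "-1 \<le> x" "x \<le> 1"
  shows "(m1^2-s^2)^2  *  (m2^2+2  *  m2  *  s  *  x+s^2) \<le> (m2^2-s^2)^2  *  (m1^2+2  *  m1  *  s  *  x+s^2)"
proof -
  define E1 where "E1 = (m1+s)^2  *  (m2+s)^2  *  ((m2-s)^2 - (m1-s)^2)"
  define E2 where "E2 = (m1-s)^2  *  (m2-s)^2  *  ((m2+s)^2 - (m1+s)^2)"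
  have e1: "E1 \<ge> 0" unfolding E1_def using assms
    by (intro mult_nonneg_nonneg) (auto intro!: power_mono simp: diff_ge_0_iff_ge)
  have e2: "E2 \<ge> 0" unfolding E2_def using assms
    by (intro mult_nonneg_nonneg) (auto intro!: power_mono simp: diff_ge_0_iff_ge)
  have id: "2 * ((m2^2-s^2)^2  *  (m1^2+2  *  m1  *  s  *  x+s^2) - (m1^2-s^2)^2  *  (m2^2+2  *  m2  *  s  *  x+s^2))
     = (1+x)  *  E1 + (1-x)  *  E2"
    unfolding E1_def E2_def by algebra
  have "(1+x)  *  E1 + (1-x)  *  E2 \<ge> 0" using e1 e2 assms by simp
  moreover have "A \<le> B" if "2 * (B-A)=P" "0 \<le> P" for A B P :: real using that by (auto simp: algebra_simps)
  ultimately show ?thesis using id by blast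
qed

lemma norm_sq_lemma:
  fixes w :: complex and m s :: real
  assumes "cmod w = 1"
  shows "(cmod (of_real m + of_real s  *  w))^2 = m^2 + 2 * m * s * Re w + s^2"
proof -
  have h1: "(Re w)^2 + (Im w)^2 = 1" using assms by (simp add: cmod_def)
  have h2: "(cmod (of_real m + of_real s * w))^2 = (Re (of_real m + of_real s * w))^2 + (Im (of_real m + of_real s * w))^2"
    by (rule cmod_power2)
  have h3: "s * s * (Im w * Im w + Re w * Re w) = s * s" using h1 by (simp add: power2_eq_square add.commute)
  show ?thesis using h2 h3 by (simp add: power2_eq_square algebra_simps)
qed

lemma mono_norm:
  fixes w :: complex and s m1 m2 :: real
  assumes "cmod w = 1" "0 \<le> s" "s \<le> m1" "m1 \<le> m2"
  shows "(m1^2-s^2)  *  cmod (of_real m2 + of_real s  *  w) \<le> (m2^2-s^2)  *  cmod (of_real m1 + of_real s  *  w)"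
proof (rule power2_le_imp_le)
  have re: "-1 \<le> Re w" "Re w \<le> 1" using abs_Re_le_cmod[of w] assms(1) by auto
  show "((m1^2-s^2)  *  cmod (of_real m2 + of_real s  *  w))^2 \<le> ((m2^2-s^2)  *  cmod (of_real m1 + of_real s  *  w))^2"
    unfolding power_mult_distrib norm_sq_lemma[OF assms(1)]
    using mono_ineq[OF assms(2,3,4) re] by blast
  have "m1^2 \<le> m2^2" using assms by (intro power_mono) auto
  moreover have "s^2 \<le> m1^2" using assms by (intro power_mono) auto
  ultimately show "0 \<le> (m2^2-s^2)  *  cmod (of_real m1 + of_real s  *  w)" by simp
qed

definition QQ :: "complex \<Rightarrow> real \<Rightarrow> complex \<Rightarrow> bool" where
  "QQ c r z \<longleftrightarrow> cmod z  *  ((cmod z)^2 - (cmod c)^2) \<le> 2 * r * cmod (of_real ((cmod z)^2) + c * z)"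

lemma QQ_scale:
  assumes "cmod c > 0" "QQ c r z" "0 \<le> l" "l \<le> 1" "0 \<le> r"
  shows "QQ c r (of_real l  *  z)"
proof -
  define s where "s = cmod c"
  define \<rho> where "\<rho> = cmod z"
  have nl: "cmod (of_real l  *  z) = l * \<rho>" using assms by (simp add: \<rho>_def norm_mult)
  show ?thesis
  proof (cases "l * \<rho> \<le> s")
    case True
    have "l * \<rho> \<ge> 0" using assms by (simp add: \<rho>_def)
    hence "(l * \<rho>)^2 \<le> s^2" using True by (intro power_mono) auto
    hence "l * \<rho>  *  ((l * \<rho>)^2 - s^2) \<le> 0" using \<open>l * \<rho> \<ge> 0\<close> by (simp add: mult_nonneg_nonpos)
    also have "0 \<le> 2 * r * cmod (of_real ((cmod (of_real l  *  z))^2) + c * (of_real l  *  z))" using assms by simp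
    finally show ?thesis unfolding QQ_def nl s_def .
  next
    case False
    have sp0: "s > 0" using assms s_def by simp
    have "l * \<rho> > 0" using False sp0 by simp
    hence lp: "l > 0" "\<rho> > 0" using assms by (auto simp: zero_less_mult_iff \<rho>_def)
    define w where "w = c * z/of_real (s * \<rho>)"
    have sp: "s > 0" using assms s_def by simp
    have wn: "cmod w = 1" using lp sp by (simp add: w_def norm_mult norm_divide s_def \<rho>_def)
    have cz: "c * z = of_real s  *  of_real \<rho>  *  w" using lp sp by (simp add: w_def)
    have e2: "of_real ((cmod z)^2) + c * z = of_real \<rho>  *  (of_real \<rho> + of_real s  *  w)"
      by (simp add: cz \<rho>_def power2_eq_square algebra_simps)
    have e1: "of_real ((cmod (of_real l  *  z))^2) + c * (of_real l * z) = of_real (l * \<rho>)  *  (of_real (l * \<rho>) + of_real s  *  w)"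
    proof -
      have "c * (of_real l * z) = of_real l * (c * z)" by (simp add: algebra_simps)
      thus ?thesis unfolding nl cz by (simp add: power2_eq_square algebra_simps)
    qed
    have Qz: "\<rho>  *  (\<rho>^2 - s^2) \<le> 2 * r * (\<rho>  *  cmod (of_real \<rho> + of_real s  *  w))"
      proof -
        have Q0: "cmod z * ((cmod z)^2 - (cmod c)^2) \<le> 2 * r * cmod (of_real ((cmod z)^2) + c * z)" using assms(2) unfolding QQ_def .
        show ?thesis using Q0 unfolding e2 by (simp add: norm_mult \<rho>_def s_def)
      qed
    hence Qz': "\<rho>^2 - s^2 \<le> 2 * r * cmod (of_real \<rho> + of_real s  *  w)" using lp
      by (smt (verit, ccfv_SIG) mult.left_commute mult_le_cancel_left_pos)
    have le: "l * \<rho> \<le> \<rho>" using assms lp by simp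
    have m: "((l * \<rho>)^2-s^2)  *  cmod (of_real \<rho> + of_real s  *  w) \<le> (\<rho>^2-s^2)  *  cmod (of_real (l * \<rho>) + of_real s  *  w)"
      using mono_norm[OF wn _ _ le] sp False by simp
    have pos: "cmod (of_real \<rho> + of_real s  *  w) > 0"
    proof -
      have "cmod (of_real \<rho> :: complex) - cmod (of_real s  *  w) \<le> cmod (of_real \<rho> + of_real s  *  w)"
        by (metis norm_diff_ineq)
      moreover have "cmod (of_real \<rho> :: complex) - cmod (of_real s  *  w) > 0" using False le sp lp \<open>l * \<rho> > 0\<close>
        by (simp add: norm_mult wn) (smt (verit) le)
      ultimately show ?thesis by linarith
    qed
    have "((l * \<rho>)^2-s^2)  *  cmod (of_real \<rho> + of_real s  *  w) \<le> 2 * r * cmod (of_real (l * \<rho>) + of_real s  *  w)  *  cmod (of_real \<rho> + of_real s  *  w)"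
      using m mult_right_mono[OF Qz', of "cmod (of_real (l * \<rho>) + of_real s  *  w)"] by (simp add: mult_ac)
    hence k: "(l * \<rho>)^2-s^2 \<le> 2 * r * cmod (of_real (l * \<rho>) + of_real s  *  w)" using pos by simp
    have fin: "l * \<rho> * ((l * \<rho>)^2-s^2) \<le> l * \<rho> * (2 * r * cmod (of_real (l * \<rho>) + of_real s * w))"
      by (rule mult_left_mono[OF k]) (use lp in simp)
    have nn: "cmod (of_real (l * \<rho>) * (of_real (l * \<rho>) + of_real s * w)) = l * \<rho> * cmod(of_real (l * \<rho>) + of_real s * w)"
      using lp by (simp add: norm_mult)
    have "QQ c r (of_real l * z) \<longleftrightarrow> l * \<rho> * ((l * \<rho>)^2-s^2) \<le> 2 * r * cmod (of_real (l * \<rho>) * (of_real (l * \<rho>) + of_real s * w))"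
      unfolding QQ_def e1 unfolding nl s_def ..
    thus ?thesis using fin unfolding nn by (simp add: mult_ac)
  qed
qed
lemma param_QQ:
  fixes c \<zeta> :: complex and t r :: real
  assumes "cmod \<zeta> = 1" "\<bar>t\<bar> \<le> 2 * r"
  shows "QQ c r (\<zeta> * (c * \<zeta> + of_real t))"
proof -
  define p where "p = c * \<zeta>"
  define W where "W = p + of_real t"
  define R where "R = t + 2 * Re p"
  have z: "\<zeta> * (c * \<zeta> + of_real t) = \<zeta> * W" by (simp add: W_def p_def)
  have nz: "cmod (\<zeta> * W) = cmod W" using assms by (simp add: norm_mult)
  have s: "cmod c = cmod p" using assms by (simp add: p_def norm_mult)
  have a: "of_real ((cmod W)^2) + c * (\<zeta> * W) = W * of_real R"
  proof -
    have "of_real ((cmod W)^2) = W * cnj W" by (rule complex_norm_square)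
    moreover have "cnj W + p = of_real R"
      by (simp add: W_def R_def complex_eq_iff)
    ultimately show ?thesis by (simp add: p_def algebra_simps) (metis distrib_left mult.commute)
  qed
  have b: "(cmod W)^2 - (cmod p)^2 = t * R"
    using cmod_power2[of W] cmod_power2[of p] by (simp add: W_def R_def power2_eq_square algebra_simps)
  have "cmod W * ((cmod W)^2 - (cmod p)^2) = cmod W * t * R" by (simp add: b)
  also have "\<dots> \<le> cmod W * \<bar>t\<bar> * \<bar>R\<bar>"
    by (metis abs_ge_self abs_mult abs_of_nonneg mult.assoc mult_left_mono norm_ge_zero)
  also have "\<dots> \<le> cmod W * (2 * r) * \<bar>R\<bar>"
    using assms by (intro mult_right_mono mult_left_mono) auto
  also have "\<dots> = 2 * r * cmod (W * of_real R)" by (simp add: norm_mult)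
  finally show ?thesis unfolding QQ_def z nz a s .
qed

lemma QQ_param:
  fixes c z :: complex and r :: real
  assumes "cmod c > 0" "cmod c \<le> r" "QQ c r z"
  shows "\<exists>\<zeta> t. cmod \<zeta> = 1 \<and> \<bar>t\<bar> \<le> 2 * r \<and> z = \<zeta> * (c * \<zeta> + of_real t)"
proof -
  define s where "s = cmod c"
  have sp: "s > 0" using assms s_def by simp
  have csq: "c * cnj c = of_real (s^2)" unfolding s_def by (rule complex_norm_square[symmetric])
  show ?thesis
  proof (cases "z = 0")
    case True
    define \<zeta> where "\<zeta> = cnj c / of_real s"
    have n: "cmod \<zeta> = 1" using sp by (simp add: \<zeta>_def norm_divide s_def)
    have "c * \<zeta> = of_real s" using sp csq by (simp add: \<zeta>_def power2_eq_square field_simps)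
    hence "z = \<zeta> * (c * \<zeta> + of_real (-s))" using True by simp
    moreover have "\<bar>-s\<bar> \<le> 2 * r" using sp assms s_def by (simp add: abs_minus_cancel) (use assms(1,2) in linarith)
    ultimately show ?thesis using n by blast
  next
    case False
    define \<rho> where "\<rho> = cmod z"
    have rp: "\<rho> > 0" using False by (simp add: \<rho>_def)
    have zsq: "z * cnj z = of_real (\<rho>^2)" unfolding \<rho>_def by (rule complex_norm_square[symmetric])
    define P where "P = of_real (\<rho>^2) + c * z"
    show ?thesis
    proof (cases "P = 0")
      case True
      have cz: "c * z = - of_real (\<rho>^2)" using True by (simp add: P_def add_eq_0_iff)
      have "cmod (c * z) = cmod (of_real (\<rho>^2) :: complex)" using cz by (metis norm_minus_cancel)
      hence "s * \<rho> = \<rho>^2" by (simp add: norm_mult norm_power s_def \<rho>_def)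
      hence rs: "\<rho> = s" using rp by (simp add: power2_eq_square)
      define \<zeta> where "\<zeta> = csqrt (z / c)"
      have c0: "c \<noteq> 0" using sp s_def by auto
      have n: "cmod \<zeta> = 1" using rs rp by (simp add: \<zeta>_def norm_divide s_def \<rho>_def)
      have "\<zeta> * (c * \<zeta> + of_real 0) = c * \<zeta>^2" by (simp add: power2_eq_square)
      also have "\<dots> = z" using c0 by (simp add: \<zeta>_def)
      finally show ?thesis using n assms sp s_def by (metis abs_zero order.trans zero_le_mult_iff less_imp_le zero_less_norm_iff c0 mult_nonneg_nonneg zero_le_numeral)
    next
      case False
      have Pn: "cmod P > 0" using False by simp
      define W where "W = of_real \<rho> * P / of_real (cmod P)"
      define \<zeta> where "\<zeta> = z / W"
      define t where "t = \<rho> * (\<rho>^2 - s^2) / cmod P"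
      have Wn: "cmod W = \<rho>" using Pn rp by (simp add: W_def norm_mult norm_divide)
      have W0: "W \<noteq> 0" using Wn rp by auto
      have n: "cmod \<zeta> = 1" using Wn rp by (simp add: \<zeta>_def norm_divide \<rho>_def)
      have Pc: "P * cnj P = of_real ((cmod P)^2)" by (rule complex_norm_square[symmetric])
      have key: "W * (W - of_real t) = c * z"
      proof -
        define K where "K = (of_real (cmod P) :: complex)"
        have K0: "K \<noteq> 0" using Pn by (simp add: K_def)
        have KK: "K * K = P * cnj P" using Pc by (simp add: K_def power2_eq_square)
        have cP0: "cnj P \<noteq> 0" using False by simp
        have D: "W - of_real t = of_real \<rho> * (c * z + of_real (s^2)) / K"
          using K0 by (simp add: W_def t_def K_def P_def field_simps)
        have "W * (W - of_real t) * cnj P = (of_real \<rho> * P / K) * (of_real \<rho> * (c * z + of_real (s^2)) / K) * cnj P"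
          unfolding D unfolding W_def K_def ..
        also have "\<dots> = of_real \<rho> * of_real \<rho> * (c * z + of_real (s^2)) * ((P * cnj P) / (K * K))"
          by (simp add: field_simps)
        also have "\<dots> = of_real \<rho> * of_real \<rho> * (c * z + of_real (s^2))" using KK K0 cP0 by simp
        also have "\<dots> = c * z * cnj P"
        proof -
          have "cnj P = of_real (\<rho>^2) + cnj c * cnj z" by (simp add: P_def)
          hence "c * z * cnj P = c * z * of_real (\<rho>^2) + (c * cnj c) * (z * cnj z)" by (simp add: algebra_simps)
          thus ?thesis using csq zsq by (simp add: algebra_simps power2_eq_square)
        qed
        finally show ?thesis using cP0 by simp
      qed
      have ze: "z = \<zeta> * (c * \<zeta> + of_real t)"
      proof -
        have "\<zeta> * (c * \<zeta> + of_real t) = z/W * (c * z/W + of_real t)" by (simp add: \<zeta>_def)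
        also have "\<dots> = z * (c * z + of_real t * W) / (W * W)" using W0 by (simp add: field_simps)
        also have "c * z + of_real t * W = W * W" using key by (simp add: algebra_simps)
        finally show ?thesis using W0 by simp
      qed
      have tb: "\<bar>t\<bar> \<le> 2 * r"
      proof (cases "s \<le> \<rho>")
        case True
        have Q: "\<rho> * (\<rho>^2 - s^2) \<le> 2 * r * cmod P" using assms(3) unfolding QQ_def P_def s_def \<rho>_def .
        have nn: "\<rho> * (\<rho>^2 - s^2) \<ge> 0" using True sp rp by (simp add: power_mono)
        hence "\<bar>t\<bar> = \<rho> * (\<rho>^2 - s^2) / cmod P" using Pn by (simp add: t_def)

        thus ?thesis using Q Pn by (simp add: divide_le_eq mult_ac)
      next
        case False
        have "cmod P \<ge> cmod (c * z) - cmod (of_real (\<rho>^2) :: complex)"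
          by (metis P_def add.commute norm_diff_ineq)
        hence Pl: "cmod P \<ge> \<rho> * (s-\<rho>)" by (simp add: norm_mult s_def \<rho>_def power2_eq_square algebra_simps)
        have lt: "\<rho>^2 < s^2" using False rp by (simp add: power_strict_mono)
        have "t \<le> 0" unfolding t_def using lt rp Pn
          by (intro divide_nonpos_pos mult_nonneg_nonpos) auto
        hence "\<bar>t\<bar> = - t" by simp
        also have "\<dots> = \<rho> * (s^2-\<rho>^2)/cmod P" by (simp add: t_def algebra_simps minus_divide_left)

        also have "\<dots> \<le> \<rho> * (s^2-\<rho>^2)/(\<rho> * (s-\<rho>))"
          using False rp Pl Pn lt by (intro divide_left_mono mult_nonneg_nonneg mult_pos_pos) (auto simp: power_mono)
        also have "\<dots> = s+\<rho>" using False rp by (simp add: power2_eq_square field_simps)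
        also have "\<dots> \<le> 2 * r" using False assms s_def by simp
        finally show ?thesis .
      qed
      show ?thesis using n ze tb by blast
    qed
  qed
qed

lemma gfun_param:
  assumes "\<phi> - \<phi>1 + \<theta> = m + d" "\<theta> - \<phi> + \<phi>3 = m - d"
  shows "gfun \<theta> \<phi> v \<phi>1 v2 \<phi>3 = cis m * ((of_real (v^2) * cis (-3 * \<theta>)) * cis m + of_real (2 * (v * v2) * cos d))"
proof -
  have h1: "(of_real (2 * cos d) :: complex) = cis d + cis (-d)" by (simp add: complex_eq_iff)
  have ha: "cis m * cis d = cis (\<phi> - \<phi>1 + \<theta>)" using assms by (simp add: cis_mult)
  have hb: "cis m * cis (-d) = cis (\<theta> - \<phi> + \<phi>3)" using assms by (simp add: cis_mult)
  have "cis (-3 * \<theta>) * cis m * cis m = cis (-3 * \<theta> + m + m)" by (simp add: cis_mult)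
  also have "-3 * \<theta> + m + m = \<phi>3 - \<theta> - \<phi>1" using assms by linarith
  finally have hc: "cis (-3 * \<theta>) * cis m * cis m = cis (\<phi>3 - \<theta> - \<phi>1)" .
  have "cis m * ((of_real (v^2) * cis (-3 * \<theta>)) * cis m + of_real (2 * (v * v2) * cos d))
     = of_real (v^2) * (cis (-3 * \<theta>) * cis m * cis m) + of_real (v * v2) * (cis m * of_real (2 * cos d))"
    by (simp add: algebra_simps)
  also have "cis m * of_real (2 * cos d) = cis (\<phi> - \<phi>1 + \<theta>) + cis (\<theta> - \<phi> + \<phi>3)"
    unfolding h1 using ha hb by (simp add: distrib_left)
  finally show ?thesis unfolding gfun_def hc by (simp add: algebra_simps)
qed

theorem mainTheorem9:
  fixes \<theta> \<phi> v v2 :: real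
  assumes "0 < v" and "v < 1"
    and "v \<le> v2" and "v2 < 1"
  shows "path_connected {gfun \<theta> \<phi> v \<phi>1 v2 \<phi>3 | \<phi>1 \<phi>3. True}
       \<and> simply_connected {gfun \<theta> \<phi> v \<phi>1 v2 \<phi>3 | \<phi>1 \<phi>3. True}"
proof -
  define c where "c = (of_real (v^2) * cis (-3 * \<theta>) :: complex)"
  define r where "r = v * v2"
  have cn: "cmod c = v^2" by (simp add: c_def norm_mult norm_power)
  have cpos: "cmod c > 0" using assms cn by simp
  have cr: "cmod c \<le> r" using assms cn by (simp add: r_def power2_eq_square)
  have r0: "r \<ge> 0" using cpos cr by linarith
  let ?S = "{gfun \<theta> \<phi> v \<phi>1 v2 \<phi>3 | \<phi>1 \<phi>3. True}"
  have SQ: "?S = {z. QQ c r z}"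
  proof (intro equalityI subsetI)
    fix z assume "z \<in> ?S"
    then obtain \<phi>1 \<phi>3 where z: "z = gfun \<theta> \<phi> v \<phi>1 v2 \<phi>3" by blast
    define m where "m = ((\<phi> - \<phi>1 + \<theta>) + (\<theta> - \<phi> + \<phi>3))/2"
    define d where "d = ((\<phi> - \<phi>1 + \<theta>) - (\<theta> - \<phi> + \<phi>3))/2"
    have "z = cis m * (c * cis m + of_real (2 * r*cos d))"
      unfolding z c_def r_def by (rule gfun_param) (simp_all add: m_def d_def field_simps)
    moreover have "\<bar>2 * r*cos d\<bar> \<le> 2 * r" using r0 abs_cos_le_one[of d]
      by (simp add: abs_mult mult_left_le)
    ultimately show "z \<in> {z. QQ c r z}" using param_QQ[of "cis m" "2 * r*cos d" r c] by simp
  next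
    fix z assume "z \<in> {z. QQ c r z}"
    then obtain \<zeta> t where n: "cmod \<zeta> = 1" and tb: "\<bar>t\<bar> \<le> 2 * r" and z: "z = \<zeta> * (c * \<zeta> + of_real t)"
      using QQ_param[OF cpos cr] by blast
    define m where "m = Arg \<zeta>"
    have z0: "\<zeta> \<noteq> 0" using n by auto
    have "cis m = sgn \<zeta>" using z0 by (simp add: m_def cis_Arg)
    also have "sgn \<zeta> = \<zeta>" using n by (simp add: sgn_div_norm)
    finally have zm: "\<zeta> = cis m" by simp
    have rp: "r > 0" using cpos cr by linarith
    define d where "d = arccos (t/(2 * r))"
    have "\<bar>t\<bar>/(2*r) \<le> 1" using tb rp by (simp add: divide_le_eq)
    hence "\<bar>t/(2*r)\<bar> \<le> 1" using rp by (simp add: abs_divide)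
    hence cd: "cos d = t/(2 * r)" unfolding d_def by (rule cos_arccos_abs)
    have t: "t = 2 * r*cos d" using rp by (simp add: cd)
    have "z = gfun \<theta> \<phi> v (\<phi> + \<theta> - (m + d)) v2 ((m - d) - \<theta> + \<phi>)"
      unfolding z zm t c_def r_def by (rule gfun_param[symmetric]) simp_all
    thus "z \<in> ?S" by blast
  qed
  have st: "starlike ?S"
    unfolding starlike_def SQ
  proof (intro bexI ballI subsetI)
    show "0 \<in> {z. QQ c r z}" by (simp add: QQ_def)
    fix x y assume x: "x \<in> {z. QQ c r z}" and y: "y \<in> closed_segment 0 x"
    from y obtain u where u0: "0 \<le> u" "u \<le> 1" "y = (1-u) *\<^sub>R 0 + u *\<^sub>R x"
      unfolding closed_segment_def by blast
    hence u: "0 \<le> u" "u \<le> 1" "y = of_real u * x" by (simp_all add: scaleR_conv_of_real)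
    show "y \<in> {z. QQ c r z}" using QQ_scale[OF cpos _ u(1,2) r0] x u by simp
  qed
  show ?thesis using starlike_imp_path_connected[OF st] starlike_imp_simply_connected[OF st] by blast
qed
end
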